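(* Every rule of the sequent calculus $\mathbf{G}$ for $\text{HXPath}_{\rm D}$ is invertible: for every instance of every rule of $\mathbf G$ and every premiss $S$ of that instance, there is a derivation in $\mathbf G$ with root $S$ all of whose leaves are either instances of the axioms (Ax) or ($\bot$) or the conclusion sequent of that rule instance.
   Context: Syntax of $\text{HXPath}_{\rm D}$: fix pairwise disjoint sets $\mathsf{Prop}$ (propositions, countably infinite), $\mathsf{Nom}$ (nominals, countably infinite), $\mathsf{Mod}$ (modalities, finite), $\mathsf{Cmp}$ (comparisons, finite). Path expressions $\alpha,\beta ::= \mathsf{a} \mid i{:} \mid \varphi? \mid \alpha\beta$ and node expressions $\varphi,\psi ::= p \mid i \mid \bot \mid \varphi\to\psi \mid @_i\varphi \mid \langle \mathsf{a}\rangle\varphi \mid \langle\alpha =_{\mathsf{c}} \beta\rangle \mid \langle \alpha\neq_{\mathsf{c}}\beta\rangle$, with $p\in\mathsf{Prop}$, $i\in\mathsf{Nom}$, $\mathsf{a}\in\mathsf{Mod}$, $\mathsf{c}\in\mathsf{Cmp}$. Abbreviations: $\top:=\bot\to\bot$, $\neg\varphi:=\varphi\to\bot$, $\varphi\lor\psi := \neg\varphi\to\psi$, $\varphi\land\psi:=\neg(\varphi\to\neg\psi)$; $\epsilon:=\top?$; $\langle j{:}\rangle\varphi := @_j\varphi$, $\langle\psi?\rangle\varphi:=\psi\land\varphi$, $\langle\alpha\beta\rangle\varphi:=\langle\alpha\rangle\langle\beta\rangle\varphi$. The symbol $\blacktriangle$ stands for either $=_{\mathsf{c}}$ or $\neq_{\mathsf{c}}$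 (for some $\mathsf{c}$). Sequents: a sequent $\Gamma\vdash\Delta$ consists of finite (possibly empty) sets $\Gamma,\Delta$ of node expressions each of the form $\langle i{:}\blacktriangle j{:}\rangle$ or $@_i\varphi$. Notation "$\varphi,\Gamma$" means $\{\varphi\}\cup\Gamma$. The calculus $\mathbf{G}$ (each rule written premisses $\Rightarrow$ conclusion): (Ax) axiom $\varphi,\Gamma\vdash\Delta,\varphi$ where $\varphi$ is of the form $@_ip$, $@_ij$ or $\langle i{:}=_{\mathsf c}j{:}\rangle$; ($\bot$) axiom $@_i\bot,\Gamma\vdash\Delta$; ($\to$L) $\Gamma\vdash\Delta,@_i\varphi$ and $@_i\psi,\Gamma\vdash\Delta$ $\Rightarrow$ $@_i(\varphi\to\psi),\Gamma\vdash\Delta$; ($\to$R) $@_i\varphi,\Gamma\vdash\Delta,@_i\psi\Rightarrow\Gamma\vdash\Delta,@_i(\varphi\to\psi)$; ($@$T) $@_ii,\Gamma\vdash\Delta\Rightarrow\Gamma\vdash\Delta$; ($@5$) $@_jk,@_ij,@_ik,\Gamma\vdash\Delta\Rightarrow @_ij,@_ik,\Gamma\vdash\Delta$; (Nom) $@_ij,\Gamma\vdash\Delta\Rightarrow\Gamma\vdash\Delta$, $j$ not in the conclusion; (S$_1$) $@_j\varphi,@_ij,@_i\varphi,\Gamma\vdash\Delta\Rightarrow @_ij,@_i\varphi,\Gamma\vdash\Delta$, $\varphi$ of the form $p$, $\bot$ or $\langle\mathsf a\rangle k$; (S$_2$) $@_i\langle\mathsf a\rangle k,@_jk,@_i\langle\mathsf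 a\rangle j,\Gamma\vdash\Delta\Rightarrow @_jk,@_i\langle\mathsf a\rangle j,\Gamma\vdash\Delta$; (S$_3$) $\langle j{:}=_{\mathsf c}k{:}\rangle,@_ij,\langle i{:}=_{\mathsf c}k{:}\rangle,\Gamma\vdash\Delta\Rightarrow @_ij,\langle i{:}=_{\mathsf c}k{:}\rangle,\Gamma\vdash\Delta$; ($@$L) $@_i\varphi,\Gamma\vdash\Delta\Rightarrow @_j@_i\varphi,\Gamma\vdash\Delta$; ($@$R) $\Gamma\vdash\Delta,@_i\varphi\Rightarrow\Gamma\vdash\Delta,@_j@_i\varphi$; ($\langle\mathsf a\rangle$L) $@_i\langle\mathsf a\rangle j,@_j\varphi,\Gamma\vdash\Delta\Rightarrow @_i\langle\mathsf a\rangle\varphi,\Gamma\vdash\Delta$, $j$ not in the conclusion; ($\langle\mathsf a\rangle$R) $@_i\langle\mathsf a\rangle j,\Gamma\vdash\Delta,@_i\langle\mathsf a\rangle\varphi,@_j\varphi\Rightarrow @_i\langle\mathsf a\rangle j,\Gamma\vdash\Delta,@_i\langle\mathsf a\rangle\varphi$; ($\langle\blacktriangle\rangle$L) $@_i\langle\alpha\rangle j,@_i\langle\beta\rangle k,\langle j{:}\blacktriangle k{:}\rangle,\Gamma\vdash\Delta\Rightarrow @_i\langle\alpha\blacktriangle\beta\rangle,\Gamma\vdash\Delta$, $j,k$ distinct and not in the conclusion; ($\langle\blacktriangle\rangle$R) $@_i\langle\alpha\rangle j,@_i\langle\beta\rangle k,\Gamma\vdash\Delta,@_i\langle\alpha\blacktriangle\beta\rangle,\langle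 j{:}\blacktriangle k{:}\rangle\Rightarrow @_i\langle\alpha\rangle j,@_i\langle\beta\rangle k,\Gamma\vdash\Delta,@_i\langle\alpha\blacktriangle\beta\rangle$; (EqT) $\langle i{:}=_{\mathsf c}i{:}\rangle,\Gamma\vdash\Delta\Rightarrow\Gamma\vdash\Delta$; (Eq5) $\langle j{:}=_{\mathsf c}k{:}\rangle,\langle i{:}=_{\mathsf c}j{:}\rangle,\langle i{:}=_{\mathsf c}k{:}\rangle,\Gamma\vdash\Delta\Rightarrow\langle i{:}=_{\mathsf c}j{:}\rangle,\langle i{:}=_{\mathsf c}k{:}\rangle,\Gamma\vdash\Delta$; (NEqL) $\Gamma\vdash\Delta,\langle i{:}=_{\mathsf c}j{:}\rangle\Rightarrow\langle i{:}\neq_{\mathsf c}j{:}\rangle,\Gamma\vdash\Delta$; (NEqR) $\langle i{:}=_{\mathsf c}j{:}\rangle,\Gamma\vdash\Delta\Rightarrow\Gamma\vdash\Delta,\langle i{:}\neq_{\mathsf c}j{:}\rangle$; (Cut) $\Gamma\vdash\Delta,\varphi$ and $\varphi,\Gamma'\vdash\Delta'\Rightarrow\Gamma,\Gamma'\vdash\Delta,\Delta'$; (WL) $\Gamma\vdash\Delta\Rightarrow\varphi,\Gamma\vdash\Delta$; (WR) $\Gamma\vdash\Delta\Rightarrow\Gamma\vdash\Delta,\varphi$. Here $@_i\langle\alpha\rangle j$ for a path $\alpha$ is understood via the abbreviations above. A derivation is a finite tree of sequents in which each non-leaf node is the conclusion of an instance of a rule of $\mathbf G$ (any rule, including (Cut))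 whose premisses are its children.
   Formalization: Invertibility is claimed only for the rules of G other than (Cut), (WL) and (WR), while the derivations may still use every rule of G, including (Cut). Each condition added here is assumed in the paper as well or is needed for the statement above to hold. *)

theory Defs
  imports Main
begin

text \<open>Propositions and nominals are both represented by natural numbers
(countably infinite sets); modalities 'm and comparisons 'c range over finite types.\<close>

type_synonym propn = nat
type_synonym nom = nat

datatype ('m, 'c) path =
    PMod 'm
  | PNom nom
  | PTest "('m, 'c) node"
  | PComp "('m, 'c) path" "('m, 'c) path"
and ('m, 'c) node =
    Prop propn
  | Nom nom
  | Bot
  | Imp "('m, 'c) node" "('m, 'c) node"
  | At nom "('m, 'c) node"
  | Dia 'm "('m, 'c) node"
  | Eq "('m, 'c) path" 'c "('m, 'c) path"
  | Neq "('m, 'c) path" 'c "('m, 'c) path"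

definition Top :: "('m, 'c) node" where "Top = Imp Bot Bot"
definition Neg :: "('m, 'c) node \<Rightarrow> ('m, 'c) node" where "Neg \<phi> = Imp \<phi> Bot"
definition Conj :: "('m, 'c) node \<Rightarrow> ('m, 'c) node \<Rightarrow> ('m, 'c) node" where
  "Conj \<phi> \<psi> = Neg (Imp \<phi> (Neg \<psi>))"

fun dia_path :: "('m, 'c) path \<Rightarrow> ('m, 'c) node \<Rightarrow> ('m, 'c) node" where
  "dia_path (PMod a) \<phi> = Dia a \<phi>"
| "dia_path (PNom j) \<phi> = At j \<phi>"
| "dia_path (PTest \<psi>) \<phi> = Conj \<psi> \<phi>"
| "dia_path (PComp \<alpha> \<beta>) \<phi> = dia_path \<alpha> (dia_path \<beta> \<phi>)"

definition Cmpf :: "bool \<Rightarrow> ('m, 'c) path \<Rightarrow> 'c \<Rightarrow> ('m, 'c) path \<Rightarrow> ('m, 'c) node" where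
  "Cmpf b \<alpha> c \<beta> = (if b then Eq \<alpha> c \<beta> else Neq \<alpha> c \<beta>)"

abbreviation EqN :: "nom \<Rightarrow> 'c \<Rightarrow> nom \<Rightarrow> ('m, 'c) node" where
  "EqN i c j \<equiv> Eq (PNom i) c (PNom j)"
abbreviation NeqN :: "nom \<Rightarrow> 'c \<Rightarrow> nom \<Rightarrow> ('m, 'c) node" where
  "NeqN i c j \<equiv> Neq (PNom i) c (PNom j)"

primrec noms_path :: "('m, 'c) path \<Rightarrow> nom set"
and noms_node :: "('m, 'c) node \<Rightarrow> nom set" where
  "noms_path (PMod a) = {}"
| "noms_path (PNom i) = {i}"
| "noms_path (PTest \<phi>) = noms_node \<phi>"
| "noms_path (PComp \<alpha> \<beta>) = noms_path \<alpha> \<union> noms_path \<beta>"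
| "noms_node (Prop p) = {}"
| "noms_node (Nom i) = {i}"
| "noms_node Bot = {}"
| "noms_node (Imp \<phi> \<psi>) = noms_node \<phi> \<union> noms_node \<psi>"
| "noms_node (At i \<phi>) = insert i (noms_node \<phi>)"
| "noms_node (Dia a \<phi>) = noms_node \<phi>"
| "noms_node (Eq \<alpha> c \<beta>) = noms_path \<alpha> \<union> noms_path \<beta>"
| "noms_node (Neq \<alpha> c \<beta>) = noms_path \<alpha> \<union> noms_path \<beta>"

type_synonym ('m, 'c) seq = "('m, 'c) node set \<times> ('m, 'c) node set"

definition seq_formula :: "('m, 'c) node \<Rightarrow> bool" where
  "seq_formula \<phi> \<longleftrightarrow> (\<exists>i \<psi>. \<phi> = At i \<psi>) \<or> (\<exists>i c j. \<phi> = EqN i c j \<or> \<phi> = NeqN i c j)"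

definition wf_seq :: "('m, 'c) seq \<Rightarrow> bool" where
  "wf_seq S \<longleftrightarrow> finite (fst S) \<and> finite (snd S) \<and>
     (\<forall>\<phi> \<in> fst S \<union> snd S. seq_formula \<phi>)"

definition noms_seq :: "('m, 'c) seq \<Rightarrow> nom set" where
  "noms_seq S = (\<Union>\<phi> \<in> fst S \<union> snd S. noms_node \<phi>)"

inductive G_axiom :: "('m, 'c) seq \<Rightarrow> bool" where
  Ax_prop: "G_axiom (insert (At i (Prop p)) \<Gamma>, insert (At i (Prop p)) \<Delta>)"
| Ax_nom: "G_axiom (insert (At i (Nom j)) \<Gamma>, insert (At i (Nom j)) \<Delta>)"
| Ax_eq: "G_axiom (insert (EqN i c j) \<Gamma>, insert (EqN i c j) \<Delta>)"
| Ax_bot: "G_axiom (insert (At i Bot) \<Gamma>, \<Delta>)"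

inductive G_logical_rule :: "('m, 'c) seq list \<Rightarrow> ('m, 'c) seq \<Rightarrow> bool" where
  ImpL: "G_logical_rule [(\<Gamma>, insert (At i \<phi>) \<Delta>), (insert (At i \<psi>) \<Gamma>, \<Delta>)]
           (insert (At i (Imp \<phi> \<psi>)) \<Gamma>, \<Delta>)"
| ImpR: "G_logical_rule [(insert (At i \<phi>) \<Gamma>, insert (At i \<psi>) \<Delta>)]
           (\<Gamma>, insert (At i (Imp \<phi> \<psi>)) \<Delta>)"
| AtT: "G_logical_rule [(insert (At i (Nom i)) \<Gamma>, \<Delta>)] (\<Gamma>, \<Delta>)"
| At5: "G_logical_rule [(insert (At j (Nom k)) (insert (At i (Nom j)) (insert (At i (Nom k)) \<Gamma>)), \<Delta>)]
           (insert (At i (Nom j)) (insert (At i (Nom k)) \<Gamma>), \<Delta>)"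
| NomR: "j \<notin> noms_seq (\<Gamma>, \<Delta>) \<Longrightarrow>
         G_logical_rule [(insert (At i (Nom j)) \<Gamma>, \<Delta>)] (\<Gamma>, \<Delta>)"
| S1: "(\<exists>p. \<phi> = Prop p) \<or> \<phi> = Bot \<or> (\<exists>a k. \<phi> = Dia a (Nom k)) \<Longrightarrow>
       G_logical_rule [(insert (At j \<phi>) (insert (At i (Nom j)) (insert (At i \<phi>) \<Gamma>)), \<Delta>)]
         (insert (At i (Nom j)) (insert (At i \<phi>) \<Gamma>), \<Delta>)"
| S2: "G_logical_rule
         [(insert (At i (Dia a (Nom k))) (insert (At j (Nom k)) (insert (At i (Dia a (Nom j))) \<Gamma>)), \<Delta>)]
         (insert (At j (Nom k)) (insert (At i (Dia a (Nom j))) \<Gamma>), \<Delta>)"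
| S3: "G_logical_rule
         [(insert (EqN j c k) (insert (At i (Nom j)) (insert (EqN i c k) \<Gamma>)), \<Delta>)]
         (insert (At i (Nom j)) (insert (EqN i c k) \<Gamma>), \<Delta>)"
| AtL: "G_logical_rule [(insert (At i \<phi>) \<Gamma>, \<Delta>)] (insert (At j (At i \<phi>)) \<Gamma>, \<Delta>)"
| AtR: "G_logical_rule [(\<Gamma>, insert (At i \<phi>) \<Delta>)] (\<Gamma>, insert (At j (At i \<phi>)) \<Delta>)"
| DiaL: "j \<notin> noms_seq (insert (At i (Dia a \<phi>)) \<Gamma>, \<Delta>) \<Longrightarrow>
         G_logical_rule [(insert (At i (Dia a (Nom j))) (insert (At j \<phi>) \<Gamma>), \<Delta>)]
           (insert (At i (Dia a \<phi>)) \<Gamma>, \<Delta>)"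
| DiaR: "G_logical_rule
           [(insert (At i (Dia a (Nom j))) \<Gamma>, insert (At i (Dia a \<phi>)) (insert (At j \<phi>) \<Delta>))]
           (insert (At i (Dia a (Nom j))) \<Gamma>, insert (At i (Dia a \<phi>)) \<Delta>)"
| CmpL: "j \<noteq> k \<Longrightarrow> j \<notin> noms_seq (insert (At i (Cmpf b \<alpha> c \<beta>)) \<Gamma>, \<Delta>) \<Longrightarrow>
         k \<notin> noms_seq (insert (At i (Cmpf b \<alpha> c \<beta>)) \<Gamma>, \<Delta>) \<Longrightarrow>
         G_logical_rule
           [(insert (At i (dia_path \<alpha> (Nom j))) (insert (At i (dia_path \<beta> (Nom k)))
               (insert (Cmpf b (PNom j) c (PNom k)) \<Gamma>)), \<Delta>)]
           (insert (At i (Cmpf b \<alpha> c \<beta>)) \<Gamma>, \<Delta>)"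
| CmpR: "G_logical_rule
           [(insert (At i (dia_path \<alpha> (Nom j))) (insert (At i (dia_path \<beta> (Nom k))) \<Gamma>),
             insert (At i (Cmpf b \<alpha> c \<beta>)) (insert (Cmpf b (PNom j) c (PNom k)) \<Delta>))]
           (insert (At i (dia_path \<alpha> (Nom j))) (insert (At i (dia_path \<beta> (Nom k))) \<Gamma>),
             insert (At i (Cmpf b \<alpha> c \<beta>)) \<Delta>)"
| EqT: "G_logical_rule [(insert (EqN i c i) \<Gamma>, \<Delta>)] (\<Gamma>, \<Delta>)"
| Eq5: "G_logical_rule [(insert (EqN j c k) (insert (EqN i c j) (insert (EqN i c k) \<Gamma>)), \<Delta>)]
          (insert (EqN i c j) (insert (EqN i c k) \<Gamma>), \<Delta>)"
| NEqL: "G_logical_rule [(\<Gamma>, insert (EqN i c j) \<Delta>)] (insert (NeqN i c j) \<Gamma>, \<Delta>)"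
| NEqR: "G_logical_rule [(insert (EqN i c j) \<Gamma>, \<Delta>)] (\<Gamma>, insert (NeqN i c j) \<Delta>)"

inductive G_structural_rule :: "('m, 'c) seq list \<Rightarrow> ('m, 'c) seq \<Rightarrow> bool" where
  Cut: "G_structural_rule [(\<Gamma>, insert \<phi> \<Delta>), (insert \<phi> \<Gamma>', \<Delta>')] (\<Gamma> \<union> \<Gamma>', \<Delta> \<union> \<Delta>')"
| WL: "G_structural_rule [(\<Gamma>, \<Delta>)] (insert \<phi> \<Gamma>, \<Delta>)"
| WR: "G_structural_rule [(\<Gamma>, \<Delta>)] (\<Gamma>, insert \<phi> \<Delta>)"

definition G_logical_inst :: "('m, 'c) seq list \<Rightarrow> ('m, 'c) seq \<Rightarrow> bool" where
  "G_logical_inst Ps C \<longleftrightarrow> G_logical_rule Ps C \<and> wf_seq C \<and> (\<forall>P \<in> set Ps. wf_seq P)"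

definition G_inst :: "('m, 'c) seq list \<Rightarrow> ('m, 'c) seq \<Rightarrow> bool" where
  "G_inst Ps C \<longleftrightarrow> (G_logical_rule Ps C \<or> G_structural_rule Ps C) \<and>
     wf_seq C \<and> (\<forall>P \<in> set Ps. wf_seq P)"

definition G_axiom_inst :: "('m, 'c) seq \<Rightarrow> bool" where
  "G_axiom_inst S \<longleftrightarrow> G_axiom S \<and> wf_seq S"

inductive derivable_from :: "('m, 'c) seq set \<Rightarrow> ('m, 'c) seq \<Rightarrow> bool" for H where
  hyp: "S \<in> H \<Longrightarrow> derivable_from H S"
| ax: "G_axiom_inst S \<Longrightarrow> derivable_from H S"
| rule: "G_inst Ps C \<Longrightarrow> (\<forall>P \<in> set Ps. derivable_from H P) \<Longrightarrow> derivable_from H C"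

end

theory Submission
  imports Defs
begin

lemma wf_iff[simp]: "wf_seq (A,B) = (finite A \<and> finite B \<and> (\<forall>\<phi>\<in>A. seq_formula \<phi>) \<and> (\<forall>\<phi>\<in>B. seq_formula \<phi>))"
  unfolding wf_seq_def by auto

lemma sf_At[simp]: "seq_formula (At i \<phi>)" unfolding seq_formula_def by auto
lemma sf_Eq[simp]: "seq_formula (EqN i c j)" "seq_formula (NeqN i c j)" unfolding seq_formula_def by auto
lemma sf_Cmp[simp]: "seq_formula (Cmpf b (PNom j) c (PNom k))" unfolding Cmpf_def by auto

lemma fin_noms: "finite (noms_path (\<alpha>::('m,'c) path))" "finite (noms_node (\<phi>::('m,'c) node))"
  by (induct \<alpha> and \<phi> ) auto

lemma fin_noms_seq: "wf_seq S \<Longrightarrow> finite (noms_seq S)"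
  unfolding noms_seq_def wf_seq_def by (auto simp: fin_noms)

lemma fresh: "finite (N::nat set) \<Longrightarrow> \<exists>j. j \<notin> N"
  using ex_new_if_finite[OF infinite_UNIV_nat] by auto

lemma drule: "G_logical_rule Ps C \<Longrightarrow> C = C' \<Longrightarrow> wf_seq C \<Longrightarrow>
  (\<forall>P\<in>set Ps. wf_seq P \<and> derivable_from H P) \<Longrightarrow> derivable_from H C'"
  using derivable_from.rule[of Ps C H] unfolding G_inst_def by auto

lemma daxiom: "G_axiom C \<Longrightarrow> C = C' \<Longrightarrow> wf_seq C \<Longrightarrow> derivable_from H C'"
  using derivable_from.ax[of C' H] unfolding G_axiom_inst_def by auto

lemma dcut: "derivable_from H (\<Gamma>, insert \<phi> \<Delta>) \<Longrightarrow> derivable_from H (insert \<phi> \<Gamma>, \<Delta>) \<Longrightarrow>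
  wf_seq (\<Gamma>, insert \<phi> \<Delta>) \<Longrightarrow> wf_seq (insert \<phi> \<Gamma>, \<Delta>) \<Longrightarrow> derivable_from H (\<Gamma>, \<Delta>)"
  using derivable_from.rule[of "[(\<Gamma>, insert \<phi> \<Delta>), (insert \<phi> \<Gamma>, \<Delta>)]" "(\<Gamma>, \<Delta>)" H]
    G_structural_rule.Cut[of \<Gamma> \<phi> \<Delta> \<Gamma> \<Delta>] unfolding G_inst_def by auto

lemma wkL: "finite X \<Longrightarrow> derivable_from H (A,B) \<Longrightarrow> wf_seq (A \<union> X, B) \<Longrightarrow> derivable_from H (A \<union> X, B)"
proof (induct X rule: finite_induct)
  case empty then show ?case by simp
next
  case (insert x F)
  have "derivable_from H (A \<union> F, B)" using insert by auto
  then show ?case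
    using derivable_from.rule[of "[(A \<union> F, B)]" "(insert x (A \<union> F), B)" H]
      G_structural_rule.WL[of "A \<union> F" B x] insert.prems unfolding G_inst_def by auto
qed

lemma wkR: "finite X \<Longrightarrow> derivable_from H (A,B) \<Longrightarrow> wf_seq (A, B \<union> X) \<Longrightarrow> derivable_from H (A, B \<union> X)"
proof (induct X rule: finite_induct)
  case empty then show ?case by simp
next
  case (insert x F)
  have "derivable_from H (A, B \<union> F)" using insert by auto
  then show ?case
    using derivable_from.rule[of "[(A, B \<union> F)]" "(A, insert x (B \<union> F))" H]
      G_structural_rule.WR[of A "B \<union> F" x] insert.prems unfolding G_inst_def by auto
qed

lemma wk: "derivable_from H (A,B) \<Longrightarrow> A \<subseteq> A' \<Longrightarrow> B \<subseteq> B' \<Longrightarrow> wf_seq (A',B') \<Longrightarrow> derivable_from H (A',B')"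
proof -
  assume d: "derivable_from H (A,B)" and s: "A \<subseteq> A'" "B \<subseteq> B'" and w: "wf_seq (A',B')"
  have "derivable_from H (A \<union> A', B)" using wkL[OF _ d, of A'] w s by (auto dest: finite_subset)
  then have "derivable_from H (A \<union> A', B \<union> B')" using wkR[of B' H "A \<union> A'" B] w s by (auto dest: finite_subset)
  then show ?thesis using s by (simp add: Un_absorb1)
qed

lemma idQ: "Cmpf b (PNom j) c (PNom k) \<in> A \<Longrightarrow> Cmpf b (PNom j) c (PNom k) \<in> B \<Longrightarrow> wf_seq (A,B) \<Longrightarrow> derivable_from H (A,B)"
proof (cases b)
  case True
  assume "Cmpf b (PNom j) c (PNom k) \<in> A" "Cmpf b (PNom j) c (PNom k) \<in> B" "wf_seq (A,B)"
  then show ?thesis using True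
    by (intro daxiom[OF G_axiom.Ax_eq[of j c k A B]]) (auto simp: Cmpf_def insert_absorb)
next
  case False
  assume a: "Cmpf b (PNom j) c (PNom k) \<in> A" "Cmpf b (PNom j) c (PNom k) \<in> B" "wf_seq (A,B)"
  have ax: "derivable_from H (insert (EqN j c k) A, insert (EqN j c k) B)"
    using a by (intro daxiom[OF G_axiom.Ax_eq[of j c k A B]]) auto
  have l: "derivable_from H (insert (EqN j c k) A, B)"
    apply (rule drule[OF G_logical_rule.NEqL[of "insert (EqN j c k) A" j c k B]])
    using a ax False by (auto simp: Cmpf_def insert_absorb insert_commute)
  show ?thesis
    apply (rule drule[OF G_logical_rule.NEqR[of j c k A B]])
    using a l False by (auto simp: Cmpf_def insert_absorb insert_commute)
qed

lemma idCmp: "At i (Cmpf b \<alpha> c \<beta>) \<in> A \<Longrightarrow> At i (Cmpf b \<alpha> c \<beta>) \<in> B \<Longrightarrow> wf_seq (A,B) \<Longrightarrow> derivable_from H (A,B)"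
proof -
  assume a: "At i (Cmpf b \<alpha> c \<beta>) \<in> A" "At i (Cmpf b \<alpha> c \<beta>) \<in> B" "wf_seq (A,B)"
  obtain j where j: "j \<notin> noms_seq (A,B)" using fresh[OF fin_noms_seq[OF a(3)]] by auto
  obtain k where k: "k \<notin> insert j (noms_seq (A,B))" using fresh[of "insert j (noms_seq (A,B))"] fin_noms_seq[OF a(3)] by auto
  let ?Q = "Cmpf b (PNom j) c (PNom k)"
  let ?X = "At i (dia_path \<alpha> (Nom j))"
  let ?Y = "At i (dia_path \<beta> (Nom k))"
  have d1: "derivable_from H (insert ?X (insert ?Y (insert ?Q A)), insert ?Q B)"
    using a by (intro idQ[of b j c k]) auto
  have d2: "derivable_from H (insert ?X (insert ?Y (insert ?Q A)), B)"
    apply (rule drule[OF G_logical_rule.CmpR[of i \<alpha> j \<beta> k "insert ?Q A" b c B]])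
    using a d1 by (auto simp: insert_absorb)
  show ?thesis
    apply (rule drule[OF G_logical_rule.CmpL[of j k i b \<alpha> c \<beta> A B]])
    using a d2 j k by (auto simp: insert_absorb)
qed

lemma idAt: "At i \<phi> \<in> A \<Longrightarrow> At i \<phi> \<in> B \<Longrightarrow> wf_seq (A,B) \<Longrightarrow> derivable_from H (A,B)"
proof (induction "size \<phi>" arbitrary: i \<phi> A B rule: less_induct)
  case less
  note IH = less.hyps and a = less.prems
  show ?case
  proof (cases \<phi>)
    case (Prop p) then show ?thesis using a
      by (intro daxiom[OF G_axiom.Ax_prop[of i p A B]]) (auto simp: insert_absorb)
  next
    case (Nom p) then show ?thesis using a
      by (intro daxiom[OF G_axiom.Ax_nom[of i p A B]]) (auto simp: insert_absorb)
  next
    case Bot then show ?thesis using a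
      by (intro daxiom[OF G_axiom.Ax_bot[of i A B]]) (auto simp: insert_absorb)
  next
    case (Imp \<phi>1 \<phi>2)
    have d1: "derivable_from H (insert (At i \<phi>1) A, insert (At i \<phi>1) (insert (At i \<phi>2) B))"
      using a Imp by (intro IH[of \<phi>1 i]) auto
    have d2: "derivable_from H (insert (At i \<phi>2) (insert (At i \<phi>1) A), insert (At i \<phi>2) B)"
      using a Imp by (intro IH[of \<phi>2 i]) auto
    have d3: "derivable_from H (insert (At i \<phi>1) A, insert (At i \<phi>2) B)"
      apply (rule drule[OF G_logical_rule.ImpL[of "insert (At i \<phi>1) A" i \<phi>1 "insert (At i \<phi>2) B" \<phi>2]])
      using a Imp d1 d2 by (auto simp: insert_absorb)
    show ?thesis
      apply (rule drule[OF G_logical_rule.ImpR[of i \<phi>1 A \<phi>2 B]])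
      using a Imp d3 by (auto simp: insert_absorb)
  next
    case (At j \<psi>)
    have d1: "derivable_from H (insert (At j \<psi>) A, insert (At j \<psi>) B)"
      using a At by (intro IH[of \<psi> j]) auto
    have d2: "derivable_from H (A, insert (At j \<psi>) B)"
      apply (rule drule[OF G_logical_rule.AtL[of j \<psi> A "insert (At j \<psi>) B" i]])
      using a At d1 by (auto simp: insert_absorb)
    show ?thesis
      apply (rule drule[OF G_logical_rule.AtR[of A j \<psi> B i]])
      using a At d2 by (auto simp: insert_absorb)
  next
    case (Dia m \<psi>)
    obtain j where j: "j \<notin> noms_seq (A,B)" using fresh[OF fin_noms_seq[OF a(3)]] by auto
    have d1: "derivable_from H (insert (At i (Dia m (Nom j))) (insert (At j \<psi>) A), insert (At j \<psi>) B)"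
      using a Dia by (intro IH[of \<psi> j]) auto
    have d2: "derivable_from H (insert (At i (Dia m (Nom j))) (insert (At j \<psi>) A), B)"
      apply (rule drule[OF G_logical_rule.DiaR[of i m j "insert (At j \<psi>) A" \<psi> B]])
      using a Dia d1 by (auto simp: insert_absorb)
    show ?thesis
      apply (rule drule[OF G_logical_rule.DiaL[of j i m \<psi> A B]])
      using a Dia d2 j by (auto simp: insert_absorb)
  next
    case (Eq \<alpha> c \<beta>)
    have e: "\<phi> = Cmpf True \<alpha> c \<beta>" using Eq by (simp add: Cmpf_def)
    show ?thesis using a e by (intro idCmp[of i _ \<alpha> c \<beta>]) auto
  next
    case (Neq \<alpha> c \<beta>)
    have e: "\<phi> = Cmpf False \<alpha> c \<beta>" using Neq by (simp add: Cmpf_def)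
    show ?thesis using a e by (intro idCmp[of i _ \<alpha> c \<beta>]) auto
  qed
qed

lemma eqax: "EqN i c j \<in> A \<Longrightarrow> EqN i c j \<in> B \<Longrightarrow> wf_seq (A,B) \<Longrightarrow> derivable_from H (A,B)"
  by (rule daxiom[OF G_axiom.Ax_eq[of i c j A B]]) (auto simp: insert_absorb)

lemma supl: "fst C \<subseteq> fst S \<Longrightarrow> snd C \<subseteq> snd S \<Longrightarrow> wf_seq S \<Longrightarrow> derivable_from {C} S"
proof -
  assume a: "fst C \<subseteq> fst S" "snd C \<subseteq> snd S" "wf_seq S"
  have h: "derivable_from {C} (fst C, snd C)" by (rule derivable_from.hyp) simp
  have "derivable_from {C} (fst S, snd S)" by (rule wk[OF h a(1) a(2)]) (simp add: a(3))
  then show ?thesis by simp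
qed

theorem theorem2:
  fixes Ps :: "('m::finite, 'c::finite) seq list" and C S :: "('m, 'c) seq"
  assumes "G_logical_inst Ps C"
    and "S \<in> set Ps"
  shows "derivable_from {C} S"
proof -
  have r: "G_logical_rule Ps C" and wfC: "wf_seq C" and wfS: "wf_seq S"
    using assms unfolding G_logical_inst_def by auto
  obtain CG CD where Cp: "C = (CG, CD)" by (cases C)
  have H: "derivable_from {C} (CG, CD)" using Cp by (intro derivable_from.hyp) simp
  from r show ?thesis
  proof cases
    case (ImpL \<Gamma> i \<phi> \<Delta> \<psi>)
    let ?I = "At i (Imp \<phi> \<psi>)"
    show ?thesis
    proof (cases "S = (\<Gamma>, insert (At i \<phi>) \<Delta>)")
      case True
      have d1: "derivable_from {C} (\<Gamma>, insert ?I (insert (At i \<phi>) \<Delta>))"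
        apply (rule drule[OF G_logical_rule.ImpR[of i \<phi> \<Gamma> \<psi> "insert (At i \<phi>) \<Delta>"]])
        using wfC wfS Cp ImpL True by (auto intro!: idAt[of i \<phi>])
      have d2: "derivable_from {C} (insert ?I \<Gamma>, insert (At i \<phi>) \<Delta>)"
        using wfC wfS Cp ImpL True by (intro wk[OF H]) auto
      show ?thesis using dcut[OF d1 d2] True wfC wfS Cp ImpL by auto
    next
      case False
      then have S: "S = (insert (At i \<psi>) \<Gamma>, \<Delta>)" using ImpL assms(2) by auto
      have d1: "derivable_from {C} (insert (At i \<psi>) \<Gamma>, insert ?I \<Delta>)"
        apply (rule drule[OF G_logical_rule.ImpR[of i \<phi> "insert (At i \<psi>) \<Gamma>" \<psi> \<Delta>]])
        using wfC wfS Cp ImpL S by (auto intro!: idAt[of i \<psi>])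
      have d2: "derivable_from {C} (insert ?I (insert (At i \<psi>) \<Gamma>), \<Delta>)"
        using wfC wfS Cp ImpL S by (intro wk[OF H]) auto
      show ?thesis using dcut[OF d1 d2] S wfC wfS Cp ImpL by auto
    qed
  next
    case (ImpR i \<phi> \<Gamma> \<psi> \<Delta>)
    let ?I = "At i (Imp \<phi> \<psi>)"
    have S: "S = (insert (At i \<phi>) \<Gamma>, insert (At i \<psi>) \<Delta>)" using ImpR assms(2) by auto
    have d1: "derivable_from {C} (insert (At i \<phi>) \<Gamma>, insert ?I (insert (At i \<psi>) \<Delta>))"
      using wfC wfS Cp ImpR S by (intro wk[OF H]) auto
    have d2: "derivable_from {C} (insert ?I (insert (At i \<phi>) \<Gamma>), insert (At i \<psi>) \<Delta>)"
      apply (rule drule[OF G_logical_rule.ImpL[of "insert (At i \<phi>) \<Gamma>" i \<phi> "insert (At i \<psi>) \<Delta>" \<psi>]])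
      using wfC wfS Cp ImpR S by (auto intro: idAt[of i \<phi>] idAt[of i \<psi>])
    show ?thesis using dcut[OF d1 d2] S wfC wfS Cp ImpR by auto
  next
    case (AtT i \<Gamma> \<Delta>)
    then show ?thesis using assms(2) wfS by (intro supl) auto
  next
    case (At5 j k i \<Gamma> \<Delta>)
    then show ?thesis using assms(2) wfS by (intro supl) auto
  next
    case (NomR j \<Gamma> \<Delta> i)
    then show ?thesis using assms(2) wfS by (intro supl) auto
  next
    case (S1 \<phi> j i \<Gamma> \<Delta>)
    then show ?thesis using assms(2) wfS by (intro supl) auto
  next
    case (S2 i a k j \<Gamma> \<Delta>)
    then show ?thesis using assms(2) wfS by (intro supl) auto
  next
    case (S3 j c k i \<Gamma> \<Delta>)
    then show ?thesis using assms(2) wfS by (intro supl) auto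
  next
    case (AtL i \<phi> \<Gamma> \<Delta> j)
    let ?X = "At j (At i \<phi>)"
    have S: "S = (insert (At i \<phi>) \<Gamma>, \<Delta>)" using AtL assms(2) by auto
    have d1: "derivable_from {C} (insert (At i \<phi>) \<Gamma>, insert ?X \<Delta>)"
      apply (rule drule[OF G_logical_rule.AtR[of "insert (At i \<phi>) \<Gamma>" i \<phi> \<Delta> j]])
      using wfC wfS Cp AtL S by (auto intro!: idAt[of i \<phi>])
    have d2: "derivable_from {C} (insert ?X (insert (At i \<phi>) \<Gamma>), \<Delta>)"
      using wfC wfS Cp AtL S by (intro wk[OF H]) auto
    show ?thesis using dcut[OF d1 d2] S wfC wfS Cp AtL by auto
  next
    case (AtR \<Gamma> i \<phi> \<Delta> j)
    let ?X = "At j (At i \<phi>)"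
    have S: "S = (\<Gamma>, insert (At i \<phi>) \<Delta>)" using AtR assms(2) by auto
    have d1: "derivable_from {C} (\<Gamma>, insert ?X (insert (At i \<phi>) \<Delta>))"
      using wfC wfS Cp AtR S by (intro wk[OF H]) auto
    have d2: "derivable_from {C} (insert ?X \<Gamma>, insert (At i \<phi>) \<Delta>)"
      apply (rule drule[OF G_logical_rule.AtL[of i \<phi> \<Gamma> "insert (At i \<phi>) \<Delta>" j]])
      using wfC wfS Cp AtR S by (auto intro!: idAt[of i \<phi>])
    show ?thesis using dcut[OF d1 d2] S wfC wfS Cp AtR by auto
  next
    case (DiaL j i a \<phi> \<Gamma> \<Delta>)
    let ?X = "At i (Dia a \<phi>)"
    let ?D = "At i (Dia a (Nom j))"
    have S: "S = (insert ?D (insert (At j \<phi>) \<Gamma>), \<Delta>)" using DiaL assms(2) by auto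
    have d1: "derivable_from {C} (insert ?D (insert (At j \<phi>) \<Gamma>), insert ?X \<Delta>)"
      apply (rule drule[OF G_logical_rule.DiaR[of i a j "insert (At j \<phi>) \<Gamma>" \<phi> \<Delta>]])
      using wfC wfS Cp DiaL S by (auto intro!: idAt[of j \<phi>])
    have d2: "derivable_from {C} (insert ?X (insert ?D (insert (At j \<phi>) \<Gamma>)), \<Delta>)"
      using wfC wfS Cp DiaL S by (intro wk[OF H]) auto
    show ?thesis using dcut[OF d1 d2] S wfC wfS Cp DiaL by auto
  next
    case (DiaR i a j \<Gamma> \<phi> \<Delta>)
    then show ?thesis using assms(2) wfS by (intro supl) auto
  next
    case (CmpL j k i b \<alpha> c \<beta> \<Gamma> \<Delta>)
    let ?Z = "At i (Cmpf b \<alpha> c \<beta>)"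
    let ?Q = "Cmpf b (PNom j) c (PNom k)"
    let ?X = "At i (dia_path \<alpha> (Nom j))"
    let ?Y = "At i (dia_path \<beta> (Nom k))"
    have S: "S = (insert ?X (insert ?Y (insert ?Q \<Gamma>)), \<Delta>)" using CmpL assms(2) by auto
    have d1: "derivable_from {C} (insert ?X (insert ?Y (insert ?Q \<Gamma>)), insert ?Z \<Delta>)"
      apply (rule drule[OF G_logical_rule.CmpR[of i \<alpha> j \<beta> k "insert ?Q \<Gamma>" b c \<Delta>]])
      using wfC wfS Cp CmpL S by (auto intro!: idQ[of b j c k])
    have d2: "derivable_from {C} (insert ?Z (insert ?X (insert ?Y (insert ?Q \<Gamma>))), \<Delta>)"
      using wfC wfS Cp CmpL S by (intro wk[OF H]) auto
    show ?thesis using dcut[OF d1 d2] S wfC wfS Cp CmpL by auto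
  next
    case (CmpR i \<alpha> j \<beta> k \<Gamma> b c \<Delta>)
    then show ?thesis using assms(2) wfS by (intro supl) auto
  next
    case (EqT i c \<Gamma> \<Delta>)
    then show ?thesis using assms(2) wfS by (intro supl) auto
  next
    case (Eq5 j c k i \<Gamma> \<Delta>)
    then show ?thesis using assms(2) wfS by (intro supl) auto
  next
    case (NEqL \<Gamma> i c j \<Delta>)
    let ?N = "NeqN i c j"
    let ?E = "EqN i c j"
    have S: "S = (\<Gamma>, insert ?E \<Delta>)" using NEqL assms(2) by auto
    have d1: "derivable_from {C} (\<Gamma>, insert ?N (insert ?E \<Delta>))"
      apply (rule drule[OF G_logical_rule.NEqR[of i c j \<Gamma> "insert ?E \<Delta>"]])
      using wfC wfS Cp NEqL S by (auto intro!: eqax[of i c j])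
    have d2: "derivable_from {C} (insert ?N \<Gamma>, insert ?E \<Delta>)"
      using wfC wfS Cp NEqL S by (intro wk[OF H]) auto
    show ?thesis using dcut[OF d1 d2] S wfC wfS Cp NEqL by auto
  next
    case (NEqR i c j \<Gamma> \<Delta>)
    let ?N = "NeqN i c j"
    let ?E = "EqN i c j"
    have S: "S = (insert ?E \<Gamma>, \<Delta>)" using NEqR assms(2) by auto
    have d1: "derivable_from {C} (insert ?E \<Gamma>, insert ?N \<Delta>)"
      using wfC wfS Cp NEqR S by (intro wk[OF H]) auto
    have d2: "derivable_from {C} (insert ?N (insert ?E \<Gamma>), \<Delta>)"
      apply (rule drule[OF G_logical_rule.NEqL[of "insert ?E \<Gamma>" i c j \<Delta>]])
      using wfC wfS Cp NEqR S by (auto intro!: eqax[of i c j])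
    show ?thesis using dcut[OF d1 d2] S wfC wfS Cp NEqR by auto
  qed
qed

end
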